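(* For every state $\rho\in\mathsf{St}(S)$, $$\mathsf{Erg}(\rho)\le \mathsf A_w(\rho)\,\max_{\sigma\in\mathsf{St}(S):\ \mathrm{Supp}(\sigma)\subseteq\mathrm{Supp}(\rho)}\mathsf{Erg}(\sigma)$$ and $$\mathsf{Erg}(\rho)\le\min\{\mathsf A_r(\rho),1\}\,(E_{i_{\max}}-E_1),$$ where $i_{\max}=\max\{i:\langle i|\rho|i\rangle\neq0\}$.
   Context: $S$ is a $d$-dimensional quantum system with non-degenerate Hamiltonian $H=\sum_i E_i|i\rangle\langle i|$, $E_1<\dots<E_d$. $\mathsf{St}(S)$ is the set of density matrices; $\mathrm{Supp}$ denotes the support (range). Ergotropy: $\mathsf{Erg}(\rho)=\mathrm{Tr}[H\rho]-\min_U\mathrm{Tr}[HU\rho U^\dagger]$ over unitaries $U$. $\mathsf P(S)$ is the set of passive states, i.e. states $\sum_i p_i|i\rangle\langle i|$ with $p_1\ge\dots\ge p_d$. Activity weight: $\mathsf A_w(\rho)=\min\{t\ge0:\ \rho=t\sigma+(1-t)\tau,\ \sigma\in\mathsf{St}(S),\ \tau\in\mathsf P(S)\}$. Robustness of activity: $\mathsf A_r(\rho)=\min\{t\ge0:\ \exists\sigma\in\mathsf{St}(S),\ (\rho+t\sigma)/(1+t)\in\mathsf P(S)\}$. *)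

theory Defs
  imports Complex_Main "Jordan_Normal_Form.Schur_Decomposition"
begin

text \<open>Quantum system of dimension d; matrices are d x d complex matrices, basis
  vectors are indexed 0..d-1 (paper's index i corresponds to i-1 here).\<close>

definition mtrace :: "complex mat \<Rightarrow> complex" where
  "mtrace A = (\<Sum>i<dim_row A. A $$ (i, i))"

definition hamiltonian :: "nat \<Rightarrow> (nat \<Rightarrow> real) \<Rightarrow> complex mat" where
  "hamiltonian d E = mat_diag d (\<lambda>i. complex_of_real (E i))"

definition psd_mat :: "nat \<Rightarrow> complex mat \<Rightarrow> bool" where
  "psd_mat d A \<longleftrightarrow> A \<in> carrier_mat d d \<and> mat_adjoint A = A \<and>
     (\<forall>v \<in> carrier_vec d. 0 \<le> Re ((A *\<^sub>v v) \<bullet>c v))"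

definition density :: "nat \<Rightarrow> complex mat \<Rightarrow> bool" where
  "density d \<rho> \<longleftrightarrow> psd_mat d \<rho> \<and> mtrace \<rho> = 1"

definition unitary_mat :: "nat \<Rightarrow> complex mat \<Rightarrow> bool" where
  "unitary_mat d U \<longleftrightarrow> U \<in> carrier_mat d d \<and> mat_adjoint U * U = 1\<^sub>m d"

definition energy :: "nat \<Rightarrow> (nat \<Rightarrow> real) \<Rightarrow> complex mat \<Rightarrow> real" where
  "energy d E \<rho> = Re (mtrace (hamiltonian d E * \<rho>))"

text \<open>Ergotropy; the minimum over unitaries is written as an infimum (it is attained).\<close>
definition ergotropy :: "nat \<Rightarrow> (nat \<Rightarrow> real) \<Rightarrow> complex mat \<Rightarrow> real" where
  "ergotropy d E \<rho> = energy d E \<rho> -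
     (INF U \<in> {U. unitary_mat d U}. energy d E (U * \<rho> * mat_adjoint U))"

definition passive_state :: "nat \<Rightarrow> complex mat \<Rightarrow> bool" where
  "passive_state d \<tau> \<longleftrightarrow> density d \<tau> \<and>
     (\<exists>p :: nat \<Rightarrow> real. \<tau> = mat_diag d (\<lambda>i. complex_of_real (p i)) \<and>
        (\<forall>i j. i \<le> j \<longrightarrow> j < d \<longrightarrow> p j \<le> p i))"

definition activity_weight :: "nat \<Rightarrow> complex mat \<Rightarrow> real" where
  "activity_weight d \<rho> = Inf {t. t \<ge> 0 \<and> (\<exists>\<sigma> \<tau>. density d \<sigma> \<and> passive_state d \<tau> \<and>
      \<rho> = complex_of_real t \<cdot>\<^sub>m \<sigma> + complex_of_real (1 - t) \<cdot>\<^sub>m \<tau>)}"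

definition activity_robustness :: "nat \<Rightarrow> complex mat \<Rightarrow> real" where
  "activity_robustness d \<rho> = Inf {t. t \<ge> 0 \<and> (\<exists>\<sigma>. density d \<sigma> \<and>
      passive_state d (complex_of_real (1 / (1 + t)) \<cdot>\<^sub>m (\<rho> + complex_of_real t \<cdot>\<^sub>m \<sigma>)))}"

definition supp :: "nat \<Rightarrow> complex mat \<Rightarrow> complex vec set" where
  "supp d A = {A *\<^sub>v v | v. v \<in> carrier_vec d}"

end

theory Submission
  imports Defs
begin



definition qf :: "nat \<Rightarrow> (nat \<Rightarrow> nat \<Rightarrow> complex) \<Rightarrow> (nat \<Rightarrow> complex) \<Rightarrow> complex" where
  "qf n A v = (\<Sum>i<n. \<Sum>j<n. cnj (v i) * A i j * v j)"
definition bf :: "nat \<Rightarrow> (nat \<Rightarrow> nat \<Rightarrow> complex) \<Rightarrow> (nat \<Rightarrow> complex) \<Rightarrow> (nat \<Rightarrow> complex) \<Rightarrow> complex" where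
  "bf n A x y = (\<Sum>i<n. \<Sum>j<n. cnj (x i) * A i j * y j)"
definition hermf :: "nat \<Rightarrow> (nat \<Rightarrow> nat \<Rightarrow> complex) \<Rightarrow> bool" where
  "hermf n A \<longleftrightarrow> (\<forall>i<n. \<forall>j<n. A j i = cnj (A i j))"
definition psdf :: "nat \<Rightarrow> (nat \<Rightarrow> nat \<Rightarrow> complex) \<Rightarrow> bool" where
  "psdf n A \<longleftrightarrow> (\<forall>v. 0 \<le> Re (qf n A v))"

lemma hermfD: "hermf n A \<Longrightarrow> i < n \<Longrightarrow> j < n \<Longrightarrow> A j i = cnj (A i j)"
  unfolding hermf_def by blast

lemma bf_herm: assumes "hermf n A" shows "bf n A x y = cnj (bf n A y x)"
proof -
  have "cnj (bf n A y x) = (\<Sum>i<n. \<Sum>j<n. y i * cnj (A i j) * cnj (x j))"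
    unfolding bf_def by simp
  also have "\<dots> = (\<Sum>i<n. \<Sum>j<n. y i * A j i * cnj (x j))"
    using hermfD[OF assms] by (intro sum.cong refl) (metis lessThan_iff)
  also have "\<dots> = (\<Sum>j<n. \<Sum>i<n. y i * A j i * cnj (x j))" by (rule sum.swap)
  also have "\<dots> = bf n A x y" unfolding bf_def by (intro sum.cong refl) (simp add: mult_ac)
  finally show ?thesis by simp
qed

lemma qf_expand: "qf n A (\<lambda>i. v i + complex_of_real s * w i) =
   qf n A v + complex_of_real s * bf n A v w + complex_of_real s * bf n A w v
   + complex_of_real (s^2) * qf n A w"
proof -
  let ?s = "complex_of_real s"
  have "qf n A (\<lambda>i. v i + ?s * w i) = (\<Sum>i<n. \<Sum>j<n.
      cnj (v i) * A i j * v j + ?s * (cnj (v i) * A i j * w j) + ?s * (cnj (w i) * A i j * v j)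
      + complex_of_real (s^2) * (cnj (w i) * A i j * w j))"
    unfolding qf_def by (intro sum.cong refl) (simp add: algebra_simps power2_eq_square)
  also have "\<dots> = qf n A v + ?s * bf n A v w + ?s * bf n A w v + complex_of_real (s^2) * qf n A w"
    unfolding qf_def bf_def by (simp add: sum.distrib sum_distrib_left)
  finally show ?thesis .
qed

lemma null_lemma:
  assumes h: "hermf n A" and p: "psdf n A" and z: "Re (qf n A v) = 0"
  shows "\<forall>i<n. (\<Sum>j<n. A i j * v j) = 0"
proof -
  define w where "w = (\<lambda>i. \<Sum>j<n. A i j * v j)"
  define N where "N = (\<Sum>i<n. (cmod (w i))^2)"
  have bwv: "bf n A w v = of_real N"
  proof -
    have "bf n A w v = (\<Sum>i<n. cnj (w i) * (\<Sum>j<n. A i j * v j))"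
      unfolding bf_def by (simp add: sum_distrib_left mult.assoc)
    also have "\<dots> = (\<Sum>i<n. cnj (w i) * w i)" by (simp add: w_def)
    also have "\<dots> = (\<Sum>i<n. of_real ((cmod (w i))^2))"
      by (intro sum.cong refl) (metis complex_norm_square mult.commute of_real_power)
    finally show ?thesis unfolding N_def by simp
  qed
  have bvw: "bf n A v w = of_real N" using bf_herm[OF h, of v w] bwv by simp
  define q where "q = Re (qf n A w)"
  have q0: "q \<ge> 0" using p unfolding psdf_def q_def by auto
  have N0: "N \<ge> 0" unfolding N_def by (simp add: sum_nonneg)
  have key: "0 \<le> 2 * s * N + s^2 * q" for s
  proof -
    have "0 \<le> Re (qf n A (\<lambda>i. v i + complex_of_real s * w i))" using p unfolding psdf_def by auto
    also have "\<dots> = 2 * s * N + s^2 * q"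
      unfolding qf_expand bvw bwv q_def using z by simp
    finally show ?thesis .
  qed
  have "N = 0"
  proof (rule ccontr)
    assume "N \<noteq> 0" hence Np: "N > 0" using N0 by simp
    define s where "s = - N / (q + 1)"
    have e: "2 * s * N + s^2 * q = s * (2 * N + s * q)" by (simp add: power2_eq_square algebra_simps)
    have q1: "q + 1 > 0" using q0 by simp
    have sneg: "s < 0" unfolding s_def using Np q1 by simp
    have "N * q \<le> N * (q + 1)" using Np by simp
    hence "N * q / (q + 1) \<le> N" using q1 by (simp add: divide_le_eq)
    hence "s * q \<ge> - N" unfolding s_def by simp
    hence "2 * N + s * q > 0" using Np by simp
    hence "s * (2 * N + s * q) < 0" using sneg by (simp add: mult_neg_pos)
    thus False using key[of s] e by simp
  qed
  hence "\<forall>i<n. cmod (w i) ^2 = 0" unfolding N_def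
    by (subst (asm) sum_nonneg_eq_0_iff) auto
  thus ?thesis unfolding w_def by simp
qed




declare sum.lessThan_Suc[simp del]

definition sh :: "complex \<Rightarrow> (nat \<Rightarrow> complex) \<Rightarrow> nat \<Rightarrow> complex" where
  "sh c v = (\<lambda>i. if i = 0 then c else v (i - 1))"

lemma sh_0[simp]: "sh c v 0 = c" and sh_Suc[simp]: "sh c v (Suc i) = v i"
  unfolding sh_def by auto

lemma sum_sh: "(\<Sum>j<Suc n. f j * sh c v j) = f 0 * c + (\<Sum>j<n. f (Suc j) * v j)"
  by (simp add: sum.lessThan_Suc_shift)

lemma sum_sh': "(\<Sum>j<Suc n. y j * cnj (sh c v j)) = y 0 * cnj c + (\<Sum>j<n. y (Suc j) * cnj (v j))"
  by (simp add: sum.lessThan_Suc_shift)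

lemma qf_sh: "qf (Suc n) A (sh c v) = cnj c * A 0 0 * c + cnj c * (\<Sum>j<n. A 0 (Suc j) * v j)
   + (\<Sum>i<n. cnj (v i) * A (Suc i) 0) * c + qf n (\<lambda>i j. A (Suc i) (Suc j)) v"
proof -
  have "qf (Suc n) A (sh c v) = (\<Sum>i<Suc n. cnj (sh c v i) * (\<Sum>j<Suc n. A i j * sh c v j))"
    unfolding qf_def by (simp add: sum_distrib_left mult.assoc)
  also have "\<dots> = cnj c * (A 0 0 * c + (\<Sum>j<n. A 0 (Suc j) * v j))
     + (\<Sum>i<n. cnj (v i) * (A (Suc i) 0 * c + (\<Sum>j<n. A (Suc i) (Suc j) * v j)))"
    by (simp only: sum_sh sum.lessThan_Suc_shift sh_0 sh_Suc)
  also have "\<dots> = cnj c * A 0 0 * c + cnj c * (\<Sum>j<n. A 0 (Suc j) * v j)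
   + (\<Sum>i<n. cnj (v i) * A (Suc i) 0) * c + qf n (\<lambda>i j. A (Suc i) (Suc j)) v"
    unfolding qf_def by (simp add: algebra_simps sum.distrib sum_distrib_left sum_distrib_right)
  finally show ?thesis .
qed

lemma hermf_sub: "hermf (Suc n) A \<Longrightarrow> hermf n (\<lambda>i j. A (Suc i) (Suc j))"
  unfolding hermf_def using Suc_mono by blast

lemma range_fun:
  "hermf n A \<Longrightarrow> psdf n A \<Longrightarrow>
   (\<And>x. (\<forall>i<n. (\<Sum>j<n. A i j * x j) = 0) \<Longrightarrow> (\<Sum>i<n. y i * cnj (x i)) = 0) \<Longrightarrow>
   \<exists>x. \<forall>i<n. (\<Sum>j<n. A i j * x j) = y i"
proof (induction n arbitrary: A y)
  case 0 thus ?case by simp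
next
  case (Suc n A y)
  note h = Suc.prems(1) and p = Suc.prems(2) and ker = Suc.prems(3)
  define a where "a = A 0 0"
  have a_real: "cnj a = a" unfolding a_def using hermfD[OF h, of 0 0] by (metis zero_less_Suc)
  have Ah: "A 0 (Suc j) = cnj (A (Suc j) 0)" if "j < n" for j
    using hermfD[OF h, of "Suc j" 0] that by simp
  define A' where "A' = (\<lambda>i j. A (Suc i) (Suc j))"
  have h': "hermf n A'" unfolding A'_def using hermf_sub[OF h] .
  define e0 where "e0 = sh 1 (\<lambda>_. 0)"
  have Ae0: "(\<Sum>j<Suc n. A i j * e0 j) = A i 0" for i
    unfolding e0_def sum_sh by simp
  show ?case
  proof (cases "a = 0")
    case True
    have "qf (Suc n) A e0 = a" unfolding e0_def qf_sh a_def by (simp add: qf_def)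
    hence "Re (qf (Suc n) A e0) = 0" using True by simp
    from null_lemma[OF h p this] have col0: "A i 0 = 0" if "i < Suc n" for i
      using Ae0 that by simp
    have row0: "A 0 (Suc j) = 0" if "j < n" for j using Ah[OF that] col0[of "Suc j"] that by simp
    have p': "psdf n A'" unfolding psdf_def
    proof
      fix v
      have "qf (Suc n) A (sh 0 v) = qf n A' v" unfolding qf_sh A'_def by (simp add: qf_def)
      thus "0 \<le> Re (qf n A' v)" using p unfolding psdf_def by metis
    qed
    have y0: "y 0 = 0"
    proof -
      have "(\<Sum>i<Suc n. y i * cnj (e0 i)) = 0"
        using ker[of e0] Ae0 col0 by simp
      thus ?thesis unfolding e0_def sum_sh' by simp
    qed
    have "\<exists>x. \<forall>i<n. (\<Sum>j<n. A' i j * x j) = y (Suc i)"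
    proof (rule Suc.IH[OF h' p'])
      fix x assume x: "\<forall>i<n. (\<Sum>j<n. A' i j * x j) = 0"
      have "\<forall>i<Suc n. (\<Sum>j<Suc n. A i j * sh 0 x j) = 0"
      proof (intro allI impI)
        fix i assume i: "i < Suc n"
        show "(\<Sum>j<Suc n. A i j * sh 0 x j) = 0"
        proof (cases i)
          case 0 thus ?thesis unfolding sum_sh using row0 by simp
        next
          case (Suc i') thus ?thesis unfolding sum_sh using x i unfolding A'_def by simp
        qed
      qed
      from ker[OF this] show "(\<Sum>i<n. y (Suc i) * cnj (x i)) = 0" unfolding sum_sh' by simp
    qed
    then obtain x where x: "\<forall>i<n. (\<Sum>j<n. A' i j * x j) = y (Suc i)" by blast
    show ?thesis
    proof (rule exI[of _ "sh 0 x"], intro allI impI)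
      fix i assume i: "i < Suc n"
      show "(\<Sum>j<Suc n. A i j * sh 0 x j) = y i"
      proof (cases i)
        case 0 thus ?thesis unfolding sum_sh using row0 y0 by simp
      next
        case (Suc i') thus ?thesis unfolding sum_sh using x i unfolding A'_def by simp
      qed
    qed
  next
    case False
    define S where "S = (\<lambda>i j. A (Suc i) (Suc j) - A (Suc i) 0 * A 0 (Suc j) / a)"
    have Ssum: "(\<Sum>j<n. S i j * x j) = (\<Sum>j<n. A (Suc i) (Suc j) * x j)
        - A (Suc i) 0 * (\<Sum>j<n. A 0 (Suc j) * x j) / a" for i x
      unfolding S_def by (simp add: algebra_simps sum_subtractf sum_distrib_left sum_divide_distrib)
    have hS: "hermf n S" unfolding hermf_def
    proof (intro allI impI)
      fix i j assume i: "i < n" and j: "j < n"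
      show "S j i = cnj (S i j)" unfolding S_def
        using hermfD[OF h, of "Suc i" "Suc j"] Ah[OF i] Ah[OF j] a_real i j
        by (simp add: mult.commute)
    qed
    have pS: "psdf n S" unfolding psdf_def
    proof
      fix v
      define b where "b = (\<Sum>j<n. A 0 (Suc j) * v j)"
      define b' where "b' = (\<Sum>i<n. cnj (v i) * A (Suc i) 0)"
      have bb: "b' = cnj b" unfolding b_def b'_def
        by (simp add: Ah mult.commute)
      have "qf n S v = qf n A' v - b' * b / a"
      proof -
        have "qf n S v = (\<Sum>i<n. \<Sum>j<n. cnj (v i) * A' i j * v j
             - (cnj (v i) * A (Suc i) 0) * (A 0 (Suc j) * v j) / a)"
          unfolding qf_def S_def A'_def by (intro sum.cong refl) (simp add: algebra_simps)
        also have "\<dots> = qf n A' v - b' * b / a"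
          unfolding qf_def b_def b'_def
          by (simp add: sum_subtractf sum_divide_distrib sum_product)
        finally show ?thesis .
      qed
      also have "\<dots> = qf (Suc n) A (sh (- b / a) v)"
        unfolding qf_sh A'_def[symmetric] b_def[symmetric] b'_def[symmetric] bb
        using False a_real by (simp add: a_def[symmetric] field_simps)
      finally show "0 \<le> Re (qf n S v)" using p unfolding psdf_def by metis
    qed
    have "\<exists>x. \<forall>i<n. (\<Sum>j<n. S i j * x j) = y (Suc i) - y 0 * A (Suc i) 0 / a"
    proof (rule Suc.IH[OF hS pS])
      fix x assume x: "\<forall>i<n. (\<Sum>j<n. S i j * x j) = 0"
      define b where "b = (\<Sum>j<n. A 0 (Suc j) * x j)"
      have "\<forall>i<Suc n. (\<Sum>j<Suc n. A i j * sh (- b / a) x j) = 0"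
      proof (intro allI impI)
        fix i assume i: "i < Suc n"
        show "(\<Sum>j<Suc n. A i j * sh (- b / a) x j) = 0"
        proof (cases i)
          case 0 thus ?thesis unfolding sum_sh using False by (simp add: a_def[symmetric] b_def)
        next
          case (Suc i')
          have "(\<Sum>j<n. S i' j * x j) = 0" using x i Suc by simp
          thus ?thesis unfolding sum_sh Ssum Suc b_def by (simp add: algebra_simps)
        qed
      qed
      from ker[OF this] have "y 0 * cnj (- b / a) + (\<Sum>i<n. y (Suc i) * cnj (x i)) = 0"
        unfolding sum_sh' .
      moreover have "cnj b = (\<Sum>j<n. A (Suc j) 0 * cnj (x j))"
        unfolding b_def by (simp add: Ah)
      ultimately show "(\<Sum>i<n. (y (Suc i) - y 0 * A (Suc i) 0 / a) * cnj (x i)) = 0"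
        using a_real
        by (simp add: algebra_simps sum_subtractf sum_distrib_left sum_divide_distrib)
    qed
    then obtain x where x: "\<forall>i<n. (\<Sum>j<n. S i j * x j) = y (Suc i) - y 0 * A (Suc i) 0 / a"
      by blast
    define c where "c = (y 0 - (\<Sum>j<n. A 0 (Suc j) * x j)) / a"
    show ?thesis
    proof (rule exI[of _ "sh c x"], intro allI impI)
      fix i assume i: "i < Suc n"
      show "(\<Sum>j<Suc n. A i j * sh c x j) = y i"
      proof (cases i)
        case 0 thus ?thesis unfolding sum_sh c_def using False by (simp add: a_def[symmetric])
      next
        case (Suc i')
        have "(\<Sum>j<n. S i' j * x j) = y (Suc i') - y 0 * A (Suc i') 0 / a" using x i Suc by simp
        thus ?thesis unfolding sum_sh Ssum Suc c_def using False by (simp add: field_simps)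
      qed
    qed
  qed
qed




lemma cmod_sq: "(complex_of_real (cmod z))^2 = z * cnj z"
  by (metis complex_norm_square of_real_power)

lemma sum_if_eq: assumes "k < (n::nat)" shows "(\<Sum>l<n. if k = l then f l else 0) = f k"
  using assms by (subst sum.delta') auto

abbreviation mf :: "complex mat \<Rightarrow> nat \<Rightarrow> nat \<Rightarrow> complex" where
  "mf M \<equiv> (\<lambda>i j. M $$ (i,j))"

lemma qf_cong: "(\<And>i. i < n \<Longrightarrow> v i = w i) \<Longrightarrow> qf n A v = qf n A w"
  unfolding qf_def by (intro sum.cong refl) auto

lemma qf_congA: "(\<And>k l. k < n \<Longrightarrow> l < n \<Longrightarrow> A k l = B k l) \<Longrightarrow> qf n A v = qf n B v"
  unfolding qf_def by (intro sum.cong refl) auto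

lemma qf_lin: "qf n (\<lambda>k l. a * A k l + b * B k l) v = a * qf n A v + b * qf n B v"
  unfolding qf_def by (simp add: algebra_simps sum.distrib sum_distrib_left)

lemma qf_unit: assumes "i < n" shows "qf n A (\<lambda>k. if k = i then 1 else 0) = A i i"
proof -
  have inner: "(\<Sum>l<n. cnj (if k = i then 1 else 0) * A k l * (if l = i then 1 else 0))
     = (if k = i then A k i else 0)" for k
  proof -
    have "(\<Sum>l<n. cnj (if k = i then 1 else 0) * A k l * (if l = i then 1 else 0))
      = (\<Sum>l<n. if i = l then (if k = i then A k l else 0) else 0)"
      by (intro sum.cong refl) auto
    also have "\<dots> = (if k = i then A k i else 0)" using sum_if_eq[OF assms, of "\<lambda>l. if k = i then A k l else 0"] by simp
    finally show ?thesis .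
  qed
  have "qf n A (\<lambda>k. if k = i then 1 else 0) = (\<Sum>k<n. if i = k then A k i else 0)"
    unfolding qf_def inner by (intro sum.cong refl) auto
  also have "\<dots> = A i i" using sum_if_eq[OF assms, of "\<lambda>k. A k i"] by simp
  finally show ?thesis .
qed

lemma qf_diag: "qf n (\<lambda>k l. if k = l then p k else 0) u = (\<Sum>k<n. of_real ((cmod (u k))^2) * p k)"
proof -
  have inner: "k < n \<Longrightarrow> (\<Sum>l<n. cnj (u k) * (if k = l then p k else 0) * u l) = cnj (u k) * p k * u k" for k
  proof -
    assume k: "k < n"
    have "(\<Sum>l<n. cnj (u k) * (if k = l then p k else 0) * u l) = (\<Sum>l<n. if k = l then cnj (u k) * p k * u l else 0)"
      by (intro sum.cong refl) auto
    also have "\<dots> = cnj (u k) * p k * u k" using sum_if_eq[OF k, of "\<lambda>l. cnj (u k) * p k * u l"] by simp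
    finally show ?thesis .
  qed
  have "qf n (\<lambda>k l. if k = l then p k else 0) u = (\<Sum>k<n. cnj (u k) * p k * u k)"
    unfolding qf_def using inner by (intro sum.cong refl) auto
  also have "\<dots> = (\<Sum>k<n. of_real ((cmod (u k))^2) * p k)"
    by (intro sum.cong refl) (simp add: cmod_sq mult_ac)
  finally show ?thesis .
qed

lemma adj_index: assumes "A \<in> carrier_mat n n" "i < n" "j < n"
  shows "mat_adjoint A $$ (i,j) = cnj (A $$ (j,i))"
  using assms unfolding mat_adjoint_def by (simp add: mat_of_rows_index)

lemma adj_carrier: assumes "A \<in> carrier_mat n n" shows "mat_adjoint A \<in> carrier_mat n n"
  using assms unfolding mat_adjoint_def by (simp add: mat_of_rows_def)

lemma cscalar_qf: assumes M: "M \<in> carrier_mat n n" and v: "v \<in> carrier_vec n"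
  shows "(M *\<^sub>v v) \<bullet>c v = qf n (mf M) (\<lambda>i. v $ i)"
proof -
  have "(M *\<^sub>v v) \<bullet>c v = (\<Sum>i<n. (\<Sum>j<n. M $$ (i,j) * v $ j) * cnj (v $ i))"
    using M v by (simp add: scalar_prod_def atLeast0LessThan)
  also have "\<dots> = qf n (mf M) (\<lambda>i. v $ i)"
    unfolding qf_def by (simp add: sum_distrib_right sum_distrib_left mult_ac)
  finally show ?thesis .
qed

lemma psd_fun: assumes "psd_mat n M" shows "hermf n (mf M)" "psdf n (mf M)"
proof -
  have M: "M \<in> carrier_mat n n" and adj: "mat_adjoint M = M"
    and pos: "\<And>v. v \<in> carrier_vec n \<Longrightarrow> 0 \<le> Re ((M *\<^sub>v v) \<bullet>c v)"
    using assms unfolding psd_mat_def by auto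
  show "hermf n (mf M)" unfolding hermf_def
  proof (intro allI impI)
    fix i j assume "i < n" "j < n"
    thus "M $$ (j,i) = cnj (M $$ (i,j))" using adj_index[OF M, of j i] adj by simp
  qed
  show "psdf n (mf M)" unfolding psdf_def
  proof
    fix v :: "nat \<Rightarrow> complex"
    have "0 \<le> Re ((M *\<^sub>v vec n v) \<bullet>c vec n v)" by (rule pos) simp
    also have "(M *\<^sub>v vec n v) \<bullet>c vec n v = qf n (mf M) v"
      unfolding cscalar_qf[OF M vec_carrier] by (rule qf_cong) simp
    finally show "0 \<le> Re (qf n (mf M) v)" .
  qed
qed

lemma fun_psd: assumes M: "M \<in> carrier_mat n n" and h: "hermf n (mf M)" and p: "psdf n (mf M)"
  shows "psd_mat n M"
  unfolding psd_mat_def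
proof (intro conjI ballI)
  show "M \<in> carrier_mat n n" by fact
  show "mat_adjoint M = M"
  proof (rule eq_matI)
    fix i j assume "i < dim_row M" "j < dim_col M"
    thus "mat_adjoint M $$ (i,j) = M $$ (i,j)" using adj_index[OF M, of i j] hermfD[OF h, of j i] M by simp
  qed (use adj_carrier[OF M] M in auto)
  fix v :: "complex vec" assume v: "v \<in> carrier_vec n"
  show "0 \<le> Re ((M *\<^sub>v v) \<bullet>c v)" unfolding cscalar_qf[OF M v] using p unfolding psdf_def by auto
qed

lemma hermf_diag_real: "hermf n A \<Longrightarrow> i < n \<Longrightarrow> A i i = of_real (Re (A i i))"
  using hermfD[of n A i i] by (metis Reals_cnj_iff of_real_Re)

lemma psdf_diag: "psdf n A \<Longrightarrow> i < n \<Longrightarrow> 0 \<le> Re (A i i)"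
  unfolding psdf_def using qf_unit[of i n A] by metis

lemma density_facts: assumes "density d X"
  shows "X \<in> carrier_mat d d" "hermf d (mf X)" "psdf d (mf X)" "(\<Sum>i<d. Re (X $$ (i,i))) = 1"
proof -
  have ps: "psd_mat d X" and tr: "mtrace X = 1" using assms unfolding density_def by auto
  show X: "X \<in> carrier_mat d d" using ps unfolding psd_mat_def by auto
  show "hermf d (mf X)" "psdf d (mf X)" using psd_fun[OF ps] by auto
  have "(\<Sum>i<d. X $$ (i,i)) = 1" using tr X unfolding mtrace_def by simp
  hence "Re (\<Sum>i<d. X $$ (i,i)) = 1" by simp
  thus "(\<Sum>i<d. Re (X $$ (i,i))) = 1" by (simp add: Re_sum)
qed

lemma energy_formula: assumes X: "X \<in> carrier_mat d d"
  shows "energy d E X = (\<Sum>i<d. E i * Re (X $$ (i,i)))"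
proof -
  have "hamiltonian d E * X = Matrix.mat d d (\<lambda>(i,j). complex_of_real (E i) * X $$ (i,j))"
    unfolding hamiltonian_def by (rule mat_diag_mult_left[OF X])
  hence "mtrace (hamiltonian d E * X) = (\<Sum>i<d. complex_of_real (E i) * X $$ (i,i))"
    unfolding mtrace_def by simp
  thus ?thesis unfolding energy_def by (simp add: Re_sum)
qed

lemma conj_diag: assumes U: "U \<in> carrier_mat d d" and X: "X \<in> carrier_mat d d" and i: "i < d"
  shows "(U * X * mat_adjoint U) $$ (i,i) = qf d (mf X) (\<lambda>k. cnj (U $$ (i,k)))"
proof -
  have UX: "U * X \<in> carrier_mat d d" using U X by simp
  have aU: "mat_adjoint U \<in> carrier_mat d d" by (rule adj_carrier[OF U])
  have "(U * X * mat_adjoint U) $$ (i,i) = (\<Sum>l<d. (U * X) $$ (i,l) * mat_adjoint U $$ (l,i))"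
    using carrier_matD[OF UX] carrier_matD[OF aU] i by (simp add: scalar_prod_def atLeast0LessThan)
  also have "\<dots> = (\<Sum>l<d. (\<Sum>k<d. U $$ (i,k) * X $$ (k,l)) * cnj (U $$ (i,l)))"
    using carrier_matD[OF U] carrier_matD[OF X] i by (intro sum.cong refl) (simp add: scalar_prod_def atLeast0LessThan adj_index[OF U])
  also have "\<dots> = (\<Sum>l<d. \<Sum>k<d. U $$ (i,k) * X $$ (k,l) * cnj (U $$ (i,l)))"
    by (simp add: sum_distrib_right)
  also have "\<dots> = qf d (mf X) (\<lambda>k. cnj (U $$ (i,k)))"
    unfolding qf_def by (simp only: complex_cnj_cnj) (rule sum.swap)
  finally show ?thesis .
qed

lemma unitary_facts: assumes "unitary_mat d U"
  shows "U \<in> carrier_mat d d" "mat_adjoint U * U = 1\<^sub>m d" "U * mat_adjoint U = 1\<^sub>m d"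
proof -
  show U: "U \<in> carrier_mat d d" and a: "mat_adjoint U * U = 1\<^sub>m d"
    using assms unfolding unitary_mat_def by auto
  show "U * mat_adjoint U = 1\<^sub>m d" by (rule mat_mult_left_right_inverse[OF adj_carrier[OF U] U a])
qed

lemma unitary_orth: assumes u: "unitary_mat d U" and l: "l < d" and k: "k < d"
  shows "(\<Sum>i<d. cnj (U $$ (i,l)) * U $$ (i,k)) = (if l = k then 1 else 0)"
proof -
  note U = unitary_facts[OF u]
  have "(mat_adjoint U * U) $$ (l,k) = (\<Sum>i<d. cnj (U $$ (i,l)) * U $$ (i,k))"
    using U(1) adj_carrier[OF U(1)] l k by (simp add: scalar_prod_def atLeast0LessThan adj_index)
  thus ?thesis using U(2) l k by simp
qed

lemma unitary_colsum: assumes u: "unitary_mat d U" and k: "k < d"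
  shows "(\<Sum>i<d. (cmod (U $$ (i,k)))^2) = 1"
proof -
  have "(\<Sum>i<d. cnj (U $$ (i,k)) * U $$ (i,k)) = 1" using unitary_orth[OF u k k] by simp
  hence "(\<Sum>i<d. complex_of_real ((cmod (U $$ (i,k)))^2)) = 1"
    by (simp add: cmod_sq mult.commute)
  hence "complex_of_real (\<Sum>i<d. (cmod (U $$ (i,k)))^2) = 1" by simp
  thus ?thesis using of_real_eq_1_iff by blast
qed

lemma unitary_rowsum: assumes u: "unitary_mat d U" and i: "i < d"
  shows "(\<Sum>k<d. (cmod (U $$ (i,k)))^2) = 1"
proof -
  note U = unitary_facts[OF u]
  have "(U * mat_adjoint U) $$ (i,i) = (\<Sum>k<d. U $$ (i,k) * cnj (U $$ (i,k)))"
    using U(1) adj_carrier[OF U(1)] i by (simp add: scalar_prod_def atLeast0LessThan adj_index)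
  hence "(\<Sum>k<d. U $$ (i,k) * cnj (U $$ (i,k))) = 1" using U(3) i by simp
  hence "(\<Sum>k<d. complex_of_real ((cmod (U $$ (i,k)))^2)) = 1"
    by (simp add: cmod_sq)
  hence "complex_of_real (\<Sum>k<d. (cmod (U $$ (i,k)))^2) = 1" by simp
  thus ?thesis using of_real_eq_1_iff by blast
qed

lemma trace_rot: assumes u: "unitary_mat d U"
  shows "(\<Sum>i<d. qf d A (\<lambda>k. cnj (U $$ (i,k)))) = (\<Sum>k<d. A k k)"
proof -
  have "(\<Sum>i<d. qf d A (\<lambda>k. cnj (U $$ (i,k)))) = (\<Sum>i<d. \<Sum>k<d. \<Sum>l<d. A k l * (cnj (U $$ (i,l)) * U $$ (i,k)))"
    unfolding qf_def by (intro sum.cong refl) (simp add: mult_ac)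
  also have "\<dots> = (\<Sum>k<d. \<Sum>i<d. \<Sum>l<d. A k l * (cnj (U $$ (i,l)) * U $$ (i,k)))"
    by (rule sum.swap)
  also have "\<dots> = (\<Sum>k<d. \<Sum>l<d. \<Sum>i<d. A k l * (cnj (U $$ (i,l)) * U $$ (i,k)))"
    by (intro sum.cong refl sum.swap)
  also have "\<dots> = (\<Sum>k<d. \<Sum>l<d. A k l * (\<Sum>i<d. cnj (U $$ (i,l)) * U $$ (i,k)))"
    by (simp only: sum_distrib_left)
  also have "\<dots> = (\<Sum>k<d. \<Sum>l<d. if k = l then A k l else 0)"
    using unitary_orth[OF u] by (intro sum.cong refl) auto
  also have "\<dots> = (\<Sum>k<d. A k k)"
    by (intro sum.cong refl) (simp add: sum_if_eq)
  finally show ?thesis .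
qed




lemma abel: "(\<Sum>i<Suc n. e i * x i) = e n * (\<Sum>i<Suc n. x i) - (\<Sum>j<n. (e (Suc j) - e j) * (\<Sum>i<Suc j. x i))"
  for e x :: "nat \<Rightarrow> real"
proof (induction n)
  case 0 thus ?case by (simp add: sum.lessThan_Suc)
next
  case (Suc n)
  have "(\<Sum>i<Suc (Suc n). e i * x i) = (\<Sum>i<Suc n. e i * x i) + e (Suc n) * x (Suc n)"
    by (simp add: sum.lessThan_Suc)
  also have "\<dots> = e n * (\<Sum>i<Suc n. x i) - (\<Sum>j<n. (e (Suc j) - e j) * (\<Sum>i<Suc j. x i)) + e (Suc n) * x (Suc n)"
    using Suc.IH by simp
  also have "\<dots> = e (Suc n) * (\<Sum>i<Suc (Suc n). x i) - (\<Sum>j<Suc n. (e (Suc j) - e j) * (\<Sum>i<Suc j. x i))"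
    by (simp add: sum.lessThan_Suc[of _ "Suc n"] sum.lessThan_Suc[of _ n] algebra_simps)
  finally show ?case .
qed

lemma sum_if_lt: assumes "m \<le> (n::nat)" shows "(\<Sum>j<n. if j < m then g j else 0) = (\<Sum>j<m. (g j :: real))"
proof -
  have "(\<Sum>j<n. if j < m then g j else 0) = sum g ({..<n} \<inter> {j. j < m})"
    by (subst sum.inter_restrict) auto
  also have "{..<n} \<inter> {j. j < m} = {..<m}" using assms by auto
  finally show ?thesis .
qed

lemma ebound:
  fixes e x r :: "nat \<Rightarrow> real" and d m :: nat and b :: real
  assumes md: "m < d" and b: "b \<ge> 0"
    and mono: "\<And>j. Suc j < d \<Longrightarrow> e j \<le> e (Suc j)"
    and tot: "(\<Sum>i<d. x i) = (\<Sum>i<d. r i)"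
    and lo: "\<And>j. j < m \<Longrightarrow> (\<Sum>i<Suc j. x i) - (\<Sum>i<Suc j. r i) \<ge> -b"
    and hi: "\<And>j. m \<le> j \<Longrightarrow> j < d \<Longrightarrow> (\<Sum>i<Suc j. x i) \<ge> (\<Sum>i<Suc j. r i)"
  shows "(\<Sum>i<d. e i * x i) - (\<Sum>i<d. e i * r i) \<le> b * (e m - e 0)"
proof -
  obtain n where dn: "d = Suc n" using md by (cases d) auto
  define y where "y = (\<lambda>i. x i - r i)"
  define D where "D = (\<lambda>j. \<Sum>i<Suc j. y i)"
  have Dj: "D j = (\<Sum>i<Suc j. x i) - (\<Sum>i<Suc j. r i)" for j
    unfolding D_def y_def by (simp add: sum_subtractf)
  have "(\<Sum>i<d. e i * x i) - (\<Sum>i<d. e i * r i) = (\<Sum>i<Suc n. e i * y i)"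
    unfolding dn y_def by (simp add: sum_subtractf algebra_simps)
  also have "\<dots> = e n * D n - (\<Sum>j<n. (e (Suc j) - e j) * D j)"
    unfolding abel D_def ..
  also have "D n = 0" unfolding Dj using tot dn by simp
  also have "e n * 0 - (\<Sum>j<n. (e (Suc j) - e j) * D j) = (\<Sum>j<n. (e (Suc j) - e j) * (- D j))"
    by (simp add: sum_negf)
  also have "\<dots> \<le> (\<Sum>j<n. (e (Suc j) - e j) * (if j < m then b else 0))"
  proof (rule sum_mono)
    fix j assume j: "j \<in> {..<n}"
    have ej: "e (Suc j) - e j \<ge> 0" using mono[of j] j dn by simp
    have "- D j \<le> (if j < m then b else 0)"
      using lo[of j] hi[of j] j dn unfolding Dj by (cases "j < m") auto
    thus "(e (Suc j) - e j) * (- D j) \<le> (e (Suc j) - e j) * (if j < m then b else 0)"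
      using ej by (rule mult_left_mono)
  qed
  also have "\<dots> = (\<Sum>j<n. if j < m then b * (e (Suc j) - e j) else 0)"
    by (intro sum.cong refl) auto
  also have "\<dots> = (\<Sum>j<m. b * (e (Suc j) - e j))"
    using md dn by (intro sum_if_lt) simp
  also have "\<dots> = b * (e m - e 0)" by (simp add: sum_distrib_left[symmetric] sum_lessThan_telescope)
  finally show ?thesis .
qed

lemma kyfan:
  fixes p c :: "nat \<Rightarrow> real"
  assumes j: "j < d" and dec: "\<And>k l. k \<le> l \<Longrightarrow> l < d \<Longrightarrow> p l \<le> p k"
    and p0: "\<And>k. k < d \<Longrightarrow> 0 \<le> p k"
    and c0: "\<And>k. k < d \<Longrightarrow> 0 \<le> c k" and c1: "\<And>k. k < d \<Longrightarrow> c k \<le> 1"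
    and csum: "(\<Sum>k<d. c k) \<le> Suc j"
  shows "(\<Sum>k<d. p k * c k) \<le> (\<Sum>k<Suc j. p k)"
proof -
  define ind where "ind = (\<lambda>k. if k < Suc j then (1::real) else 0)"
  have sp: "(\<Sum>k<Suc j. p k) = (\<Sum>k<d. p k * ind k)"
  proof -
    have "(\<Sum>k<d. p k * ind k) = (\<Sum>k<d. if k < Suc j then p k else 0)"
      unfolding ind_def by (intro sum.cong refl) auto
    also have "\<dots> = (\<Sum>k<Suc j. p k)" using j by (intro sum_if_lt) simp
    finally show ?thesis by simp
  qed
  have si: "(\<Sum>k<d. ind k) = Suc j"
  proof -
    have "(\<Sum>k<d. ind k) = (\<Sum>k<d. if k < Suc j then 1 else 0)"
      unfolding ind_def by simp
    also have "\<dots> = (\<Sum>k<Suc j. 1)" using j by (intro sum_if_lt) simp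
    finally show ?thesis by simp
  qed
  have "(\<Sum>k<d. p k * c k) - (\<Sum>k<d. p k * ind k)
      = (\<Sum>k<d. (p k - p j) * (c k - ind k)) + p j * ((\<Sum>k<d. c k) - (\<Sum>k<d. ind k))"
    by (simp add: sum_subtractf[symmetric] sum_distrib_left sum.distrib[symmetric] algebra_simps)
  also have "\<dots> \<le> 0 + 0"
  proof (rule add_mono)
    show "(\<Sum>k<d. (p k - p j) * (c k - ind k)) \<le> 0"
    proof (rule sum_nonpos)
      fix k assume k: "k \<in> {..<d}"
      show "(p k - p j) * (c k - ind k) \<le> 0"
      proof (cases "k < Suc j")
        case True
        hence "p k - p j \<ge> 0" using dec[of k j] j by simp
        moreover have "c k - ind k \<le> 0" using c1[of k] k True unfolding ind_def by simp
        ultimately show ?thesis by (simp add: mult_nonneg_nonpos)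
      next
        case False
        hence "p k - p j \<le> 0" using dec[of j k] k by simp
        moreover have "c k - ind k \<ge> 0" using c0[of k] k False unfolding ind_def by simp
        ultimately show ?thesis by (simp add: mult_nonpos_nonneg)
      qed
    qed
    show "p j * ((\<Sum>k<d. c k) - (\<Sum>k<d. ind k)) \<le> 0"
      using p0[OF j] csum si by (simp add: mult_nonneg_nonpos)
  qed
  finally show ?thesis using sp by simp
qed




definition rotq :: "nat \<Rightarrow> complex mat \<Rightarrow> complex mat \<Rightarrow> nat \<Rightarrow> complex" where
  "rotq d U X i = qf d (mf X) (\<lambda>k. cnj (U $$ (i,k)))"

lemma en_rot: assumes U: "U \<in> carrier_mat d d" and X: "X \<in> carrier_mat d d"
  shows "energy d E (U * X * mat_adjoint U) = (\<Sum>i<d. E i * Re (rotq d U X i))"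
proof -
  have c: "U * X * mat_adjoint U \<in> carrier_mat d d" using U X adj_carrier[OF U] by simp
  show ?thesis unfolding energy_formula[OF c] rotq_def
    by (intro sum.cong refl) (simp add: conj_diag[OF U X])
qed

lemma ed_formula: assumes U: "U \<in> carrier_mat d d" and X: "X \<in> carrier_mat d d"
  shows "energy d E X - energy d E (U * X * mat_adjoint U) =
    (\<Sum>i<d. E i * Re (X $$ (i,i))) - (\<Sum>i<d. E i * Re (rotq d U X i))"
  unfolding en_rot[OF U X] energy_formula[OF X] ..

lemma one_adj: "mat_adjoint (1\<^sub>m d) = (1\<^sub>m d :: complex mat)"
proof (rule eq_matI)
  fix i j assume "i < dim_row (1\<^sub>m d :: complex mat)" "j < dim_col (1\<^sub>m d :: complex mat)"
  thus "mat_adjoint (1\<^sub>m d) $$ (i,j) = (1\<^sub>m d :: complex mat) $$ (i,j)"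
    using adj_index[OF one_carrier_mat, of i d j] by simp
qed (use adj_carrier[OF one_carrier_mat[of d]] in auto)

lemma one_unitary: "unitary_mat d (1\<^sub>m d)"
  unfolding unitary_mat_def one_adj by simp

lemma one_conj: "(X::complex mat) \<in> carrier_mat d d \<Longrightarrow> 1\<^sub>m d * X * mat_adjoint (1\<^sub>m d) = X"
  unfolding one_adj by simp

lemma rot_facts: assumes X: "density d X" and u: "unitary_mat d U"
  shows "\<And>i. i < d \<Longrightarrow> 0 \<le> Re (rotq d U X i)" "(\<Sum>i<d. Re (rotq d U X i)) = 1"
proof -
  note XF = density_facts[OF X]
  show "\<And>i. i < d \<Longrightarrow> 0 \<le> Re (rotq d U X i)" using XF(3) unfolding psdf_def rotq_def by auto
  have "(\<Sum>i<d. rotq d U X i) = (\<Sum>k<d. X $$ (k,k))" unfolding rotq_def by (rule trace_rot[OF u])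
  hence "Re (\<Sum>i<d. rotq d U X i) = Re (\<Sum>k<d. X $$ (k,k))" by simp
  thus "(\<Sum>i<d. Re (rotq d U X i)) = 1" using XF(4) by (simp add: Re_sum)
qed

lemma diag_nonneg: "density d X \<Longrightarrow> i < d \<Longrightarrow> 0 \<le> Re (X $$ (i,i))"
  using density_facts(3) psdf_diag by blast

lemma psum_le: assumes "\<And>i. i < d \<Longrightarrow> 0 \<le> (f i :: real)" "Suc j \<le> d"
  shows "(\<Sum>i<Suc j. f i) \<le> (\<Sum>i<d. f i)"
  by (rule sum_mono2) (use assms in auto)

lemma psum_ge0: assumes "\<And>i. i < d \<Longrightarrow> 0 \<le> (f i :: real)" "Suc j \<le> d"
  shows "0 \<le> (\<Sum>i<Suc j. f i)"
  by (rule sum_nonneg) (use assms in auto)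

lemma sum_tail_zero: assumes "\<And>i. m < i \<Longrightarrow> i < d \<Longrightarrow> (f i :: real) = 0" "m \<le> j" "j < d"
  shows "(\<Sum>i<Suc j. f i) = (\<Sum>i<d. f i)"
  by (rule sum.mono_neutral_left) (use assms in auto)

lemma passive_D: assumes "passive_state d \<tau>"
  obtains p where "\<tau> = mat_diag d (\<lambda>i. complex_of_real (p i))"
    "\<And>i j. i \<le> j \<Longrightarrow> j < d \<Longrightarrow> p j \<le> p i" "density d \<tau>"
    "\<And>i. i < d \<Longrightarrow> 0 \<le> p i" "(\<Sum>i<d. p i) = 1"
proof -
  obtain p where t: "\<tau> = mat_diag d (\<lambda>i. complex_of_real (p i))"
    and dec: "\<forall>i j. i \<le> j \<longrightarrow> j < d \<longrightarrow> p j \<le> p i" and den: "density d \<tau>"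
    using assms unfolding passive_state_def by blast
  have ent: "\<tau> $$ (i,i) = complex_of_real (p i)" if "i < d" for i
    using that unfolding t mat_diag_def by simp
  show ?thesis
  proof (rule that[OF t _ den])
    show "\<And>i j. i \<le> j \<Longrightarrow> j < d \<Longrightarrow> p j \<le> p i" using dec by blast
    show "\<And>i. i < d \<Longrightarrow> 0 \<le> p i" using diag_nonneg[OF den] ent by (metis Re_complex_of_real)
    have "(\<Sum>i<d. Re (\<tau> $$ (i,i))) = 1" using density_facts(4)[OF den] .
    thus "(\<Sum>i<d. p i) = 1" using ent by simp
  qed
qed

lemma kyfan_rot:
  assumes t: "\<tau> = mat_diag d (\<lambda>i. complex_of_real (p i))"
    and dec: "\<And>i j. i \<le> j \<Longrightarrow> j < d \<Longrightarrow> p j \<le> p i"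
    and p0: "\<And>i. i < d \<Longrightarrow> 0 \<le> p i"
    and u: "unitary_mat d U" and j: "j < d"
  shows "(\<Sum>i<Suc j. Re (rotq d U \<tau> i)) \<le> (\<Sum>k<Suc j. p k)"
proof -
  have rot: "Re (rotq d U \<tau> i) = (\<Sum>k<d. (cmod (U $$ (i,k)))^2 * p k)" for i
  proof -
    have "rotq d U \<tau> i = qf d (\<lambda>k l. if k = l then complex_of_real (p k) else 0) (\<lambda>k. cnj (U $$ (i,k)))"
      unfolding rotq_def by (rule qf_congA) (auto simp: t mat_diag_def)
    also have "\<dots> = (\<Sum>k<d. complex_of_real ((cmod (U $$ (i,k)))^2) * complex_of_real (p k))"
      unfolding qf_diag by simp
    finally show ?thesis by (simp add: Re_sum)
  qed
  define c where "c = (\<lambda>k. \<Sum>i<Suc j. (cmod (U $$ (i,k)))^2)"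
  have "(\<Sum>i<Suc j. Re (rotq d U \<tau> i)) = (\<Sum>k<d. p k * c k)"
    unfolding rot c_def by (simp add: sum_distrib_left sum.swap[of _ "{..<Suc j}"] mult_ac)
  also have "\<dots> \<le> (\<Sum>k<Suc j. p k)"
  proof (rule kyfan[OF j dec p0])
    fix k assume k: "k < d"
    show "0 \<le> c k" unfolding c_def by (simp add: sum_nonneg)
    have "c k \<le> (\<Sum>i<d. (cmod (U $$ (i,k)))^2)" unfolding c_def
      by (rule psum_le) (use j in auto)
    thus "c k \<le> 1" using unitary_colsum[OF u k] by simp
  next
    have "(\<Sum>k<d. c k) = (\<Sum>i<Suc j. \<Sum>k<d. (cmod (U $$ (i,k)))^2)"
      unfolding c_def by (rule sum.swap)
    also have "\<dots> = (\<Sum>i<Suc j. 1)"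
      using j by (intro sum.cong refl) (simp add: unitary_rowsum[OF u])
    finally show "(\<Sum>k<d. c k) \<le> real (Suc j)" by simp
  qed (auto)
  finally show ?thesis .
qed

locale sysE =
  fixes d :: nat and E :: "nat \<Rightarrow> real"
  assumes d1: "d \<ge> 1" and Emono: "\<And>i j. i < j \<Longrightarrow> j < d \<Longrightarrow> E i < E j"
begin

lemma E0_le: "i < d \<Longrightarrow> E 0 \<le> E i"
  using Emono[of 0 i] by (cases "i = 0") auto

lemma Estep: "Suc j < d \<Longrightarrow> E j \<le> E (Suc j)"
  using Emono[of j "Suc j"] by simp

lemma en_lower: assumes "\<And>i. i < d \<Longrightarrow> 0 \<le> w i" "(\<Sum>i<d. w i) = 1"
  shows "E 0 \<le> (\<Sum>i<d. E i * w i)"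
proof -
  have "E 0 = (\<Sum>i<d. E 0 * w i)" using assms(2) by (simp add: sum_distrib_left[symmetric])
  also have "\<dots> \<le> (\<Sum>i<d. E i * w i)"
    by (rule sum_mono) (use assms(1) E0_le in \<open>auto intro: mult_right_mono\<close>)
  finally show ?thesis .
qed

lemma erg_bdd: assumes X: "density d X"
  shows "bdd_below ((\<lambda>U. energy d E (U * X * mat_adjoint U)) ` {U. unitary_mat d U})"
proof (rule bdd_belowI2)
  fix U assume "U \<in> {U. unitary_mat d U}"
  hence u: "unitary_mat d U" by simp
  show "E 0 \<le> energy d E (U * X * mat_adjoint U)"
    unfolding en_rot[OF unitary_facts(1)[OF u] density_facts(1)[OF X]]
    by (rule en_lower) (use rot_facts[OF X u] in auto)
qed

lemma erg_le: assumes X: "density d X"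
  and h: "\<And>U. unitary_mat d U \<Longrightarrow> energy d E X - energy d E (U * X * mat_adjoint U) \<le> B"
  shows "ergotropy d E X \<le> B"
proof -
  have "energy d E X - B \<le> (INF U \<in> {U. unitary_mat d U}. energy d E (U * X * mat_adjoint U))"
  proof (rule cINF_greatest)
    show "{U. unitary_mat d U} \<noteq> {}" using one_unitary by blast
    fix U assume "U \<in> {U. unitary_mat d U}"
    thus "energy d E X - B \<le> energy d E (U * X * mat_adjoint U)" using h by force
  qed
  thus ?thesis unfolding ergotropy_def by simp
qed

lemma erg_ge: assumes X: "density d X" and u: "unitary_mat d U"
  shows "energy d E X - energy d E (U * X * mat_adjoint U) \<le> ergotropy d E X"
proof -
  have "(INF U \<in> {U. unitary_mat d U}. energy d E (U * X * mat_adjoint U)) \<le> energy d E (U * X * mat_adjoint U)"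
    by (rule cINF_lower[OF erg_bdd[OF X]]) (use u in simp)
  thus ?thesis unfolding ergotropy_def by simp
qed

lemma erg_nonneg: assumes X: "density d X" shows "0 \<le> ergotropy d E X"
  using erg_ge[OF X one_unitary] one_conj[OF density_facts(1)[OF X]] by simp

lemma erg_G: assumes X: "density d X" and md: "m < d"
  and z: "\<And>i. m < i \<Longrightarrow> i < d \<Longrightarrow> X $$ (i,i) = 0"
  shows "ergotropy d E X \<le> E m - E 0"
proof (rule erg_le[OF X])
  fix U assume u: "unitary_mat d U"
  note XF = density_facts[OF X] and RF = rot_facts[OF X u]
  have "energy d E X - energy d E (U * X * mat_adjoint U)
     = (\<Sum>i<d. E i * Re (X $$ (i,i))) - (\<Sum>i<d. E i * Re (rotq d U X i))"
    by (rule ed_formula[OF unitary_facts(1)[OF u] XF(1)])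
  also have "\<dots> \<le> 1 * (E m - E 0)"
  proof (rule ebound[OF md])
    show "(0::real) \<le> 1" by simp
    show "\<And>j. Suc j < d \<Longrightarrow> E j \<le> E (Suc j)" by (rule Estep)
    show "(\<Sum>i<d. Re (X $$ (i,i))) = (\<Sum>i<d. Re (rotq d U X i))" using XF(4) RF(2) by simp
    fix j
    show "j < m \<Longrightarrow> - 1 \<le> (\<Sum>i<Suc j. Re (X $$ (i,i))) - (\<Sum>i<Suc j. Re (rotq d U X i))"
    proof -
      assume j: "j < m"
      have "0 \<le> (\<Sum>i<Suc j. Re (X $$ (i,i)))"
        by (rule psum_ge0[of d]) (use diag_nonneg[OF X] j md in auto)
      moreover have "(\<Sum>i<Suc j. Re (rotq d U X i)) \<le> (\<Sum>i<d. Re (rotq d U X i))"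
        by (rule psum_le) (use RF(1) j md in auto)
      ultimately show ?thesis using RF(2) by simp
    qed
    show "m \<le> j \<Longrightarrow> j < d \<Longrightarrow> (\<Sum>i<Suc j. Re (rotq d U X i)) \<le> (\<Sum>i<Suc j. Re (X $$ (i,i)))"
    proof -
      assume mj: "m \<le> j" and jd: "j < d"
      have "(\<Sum>i<Suc j. Re (X $$ (i,i))) = (\<Sum>i<d. Re (X $$ (i,i)))"
        by (rule sum_tail_zero[OF _ mj jd]) (simp add: z)
      moreover have "(\<Sum>i<Suc j. Re (rotq d U X i)) \<le> (\<Sum>i<d. Re (rotq d U X i))"
        by (rule psum_le) (use RF(1) jd in auto)
      ultimately show ?thesis using RF(2) XF(4) by simp
    qed
  qed
  finally show "energy d E X - energy d E (U * X * mat_adjoint U) \<le> E m - E 0" by simp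
qed

lemma erg_passive_diff: assumes T: "passive_state d \<tau>" and u: "unitary_mat d U"
  shows "energy d E \<tau> - energy d E (U * \<tau> * mat_adjoint U) \<le> 0"
proof -
  obtain p where t: "\<tau> = mat_diag d (\<lambda>i. complex_of_real (p i))"
    and dec: "\<And>i j. i \<le> j \<Longrightarrow> j < d \<Longrightarrow> p j \<le> p i" and den: "density d \<tau>"
    and p0: "\<And>i. i < d \<Longrightarrow> 0 \<le> p i" and ps: "(\<Sum>i<d. p i) = 1"
    using passive_D[OF T] by blast
  have ent: "Re (\<tau> $$ (i,i)) = p i" if "i < d" for i using that unfolding t mat_diag_def by simp
  note RF = rot_facts[OF den u]
  have "energy d E \<tau> - energy d E (U * \<tau> * mat_adjoint U)
     = (\<Sum>i<d. E i * p i) - (\<Sum>i<d. E i * Re (rotq d U \<tau> i))"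
    unfolding ed_formula[OF unitary_facts(1)[OF u] density_facts(1)[OF den]]
    using ent by simp
  also have "\<dots> \<le> 0 * (E 0 - E 0)"
  proof (rule ebound)
    show "0 < d" using d1 by simp
    show "(0::real) \<le> 0" by simp
    show "\<And>j. Suc j < d \<Longrightarrow> E j \<le> E (Suc j)" by (rule Estep)
    show "(\<Sum>i<d. p i) = (\<Sum>i<d. Re (rotq d U \<tau> i))" using ps RF(2) by simp
    fix j
    show "j < 0 \<Longrightarrow> - 0 \<le> (\<Sum>i<Suc j. p i) - (\<Sum>i<Suc j. Re (rotq d U \<tau> i))" by simp
    show "0 \<le> j \<Longrightarrow> j < d \<Longrightarrow> (\<Sum>i<Suc j. Re (rotq d U \<tau> i)) \<le> (\<Sum>i<Suc j. p i)"
      using kyfan_rot[OF t dec p0 u] by simp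
  qed
  finally show ?thesis by simp
qed

end




lemma passive_intro:
  assumes dec: "\<And>i j. i \<le> j \<Longrightarrow> j < d \<Longrightarrow> p j \<le> p i" and p0: "\<And>i. i < d \<Longrightarrow> 0 \<le> p i"
    and ps: "(\<Sum>i<d. p i) = 1"
  shows "passive_state d (mat_diag d (\<lambda>i. complex_of_real (p i)))"
proof -
  let ?T = "mat_diag d (\<lambda>i. complex_of_real (p i))"
  have car: "?T \<in> carrier_mat d d" by simp
  have ent: "?T $$ (k,l) = (if k = l then complex_of_real (p k) else 0)" if "k < d" "l < d" for k l
    using that by (auto simp: mat_diag_def)
  have h: "hermf d (mf ?T)" unfolding hermf_def using ent by auto
  have p: "psdf d (mf ?T)" unfolding psdf_def
  proof
    fix v
    have "qf d (mf ?T) v = qf d (\<lambda>k l. if k = l then complex_of_real (p k) else 0) v"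
      by (rule qf_congA) (rule ent)
    also have "\<dots> = (\<Sum>k<d. complex_of_real ((cmod (v k))^2) * complex_of_real (p k))"
      by (rule qf_diag)
    finally have "Re (qf d (mf ?T) v) = (\<Sum>k<d. (cmod (v k))^2 * p k)" by (simp add: Re_sum)
    also have "\<dots> \<ge> 0" using p0 by (intro sum_nonneg) simp
    finally show "0 \<le> Re (qf d (mf ?T) v)" .
  qed
  have tr: "mtrace ?T = 1"
  proof -
    have "mtrace ?T = (\<Sum>i<d. complex_of_real (p i))" unfolding mtrace_def by (simp add: mat_diag_def)
    also have "\<dots> = complex_of_real (\<Sum>i<d. p i)" by simp
    finally show ?thesis using ps by simp
  qed
  have "density d ?T" unfolding density_def using fun_psd[OF car h p] tr by simp
  thus ?thesis unfolding passive_state_def using dec by blast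
qed

lemma qf_bound: "Re (qf n A v) \<le> (\<Sum>i<n. \<Sum>j<n. cmod (A i j)) * (\<Sum>i<n. (cmod (v i))^2)"
proof -
  define N where "N = (\<Sum>i<n. (cmod (v i))^2)"
  have vi: "(cmod (v i))^2 \<le> N" if "i < n" for i
    unfolding N_def by (rule member_le_sum) (use that in auto)
  have Re: "Re (qf n A v) \<le> cmod (qf n A v)" by (rule complex_Re_le_cmod)
  also have "\<dots> \<le> (\<Sum>i<n. cmod (\<Sum>j<n. cnj (v i) * A i j * v j))"
    unfolding qf_def by (rule norm_sum)
  also have "\<dots> \<le> (\<Sum>i<n. \<Sum>j<n. cmod (cnj (v i) * A i j * v j))"
    by (intro sum_mono norm_sum)
  also have "\<dots> \<le> (\<Sum>i<n. \<Sum>j<n. cmod (A i j) * N)"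
  proof (intro sum_mono)
    fix i j assume i: "i \<in> {..<n}" and j: "j \<in> {..<n}"
    have ab: "cmod (v i) * cmod (v j) \<le> N"
    proof -
      have "2 * (cmod (v i) * cmod (v j)) \<le> (cmod (v i))^2 + (cmod (v j))^2"
        using sum_squares_bound[of "cmod (v i)" "cmod (v j)"] by (simp add: power2_eq_square)
      thus ?thesis using vi[of i] vi[of j] i j by simp
    qed
    have "cmod (cnj (v i) * A i j * v j) = cmod (A i j) * (cmod (v i) * cmod (v j))"
      by (simp add: norm_mult)
    also have "\<dots> \<le> cmod (A i j) * N" using ab by (intro mult_left_mono) auto
    finally show "cmod (cnj (v i) * A i j * v j) \<le> cmod (A i j) * N" .
  qed
  also have "\<dots> = (\<Sum>i<n. \<Sum>j<n. cmod (A i j)) * N" by (simp add: sum_distrib_right)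
  finally show ?thesis unfolding N_def .
qed




lemma mix_entries:
  assumes S: "\<sigma> \<in> carrier_mat d d" and T: "\<tau> \<in> carrier_mat d d"
    and eq: "\<rho> = complex_of_real a \<cdot>\<^sub>m \<sigma> + complex_of_real b \<cdot>\<^sub>m \<tau>"
    and k: "k < d" and l: "l < d"
  shows "\<rho> $$ (k,l) = complex_of_real a * \<sigma> $$ (k,l) + complex_of_real b * \<tau> $$ (k,l)"
  using carrier_matD[OF S] carrier_matD[OF T] k l by (simp add: eq)

lemma Re_ofreal_mult: "Re (complex_of_real r * z) = r * Re z" by simp

lemma supp_incl:
  assumes R: "density d \<rho>" and S: "density d \<sigma>" and T: "density d \<tau>"
    and t0: "0 < t" and t1: "t \<le> 1"
    and eq: "\<rho> = complex_of_real t \<cdot>\<^sub>m \<sigma> + complex_of_real (1 - t) \<cdot>\<^sub>m \<tau>"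
  shows "supp d \<sigma> \<subseteq> supp d \<rho>"
proof
  note RF = density_facts[OF R] and SF = density_facts[OF S] and TF = density_facts[OF T]
  have ent: "\<And>k l. k < d \<Longrightarrow> l < d \<Longrightarrow> \<rho> $$ (k,l) = complex_of_real t * \<sigma> $$ (k,l) + complex_of_real (1 - t) * \<tau> $$ (k,l)"
    by (rule mix_entries[OF SF(1) TF(1) eq])
  fix w assume "w \<in> supp d \<sigma>"
  then obtain v where w: "w = \<sigma> *\<^sub>v v" and v: "v \<in> carrier_vec d" unfolding supp_def by blast
  have yv: "(\<sigma> *\<^sub>v v) $ i = (\<Sum>j<d. \<sigma> $$ (i,j) * v $ j)" if "i < d" for i
    using carrier_matD[OF SF(1)] v that by (simp add: scalar_prod_def atLeast0LessThan)
  have "\<exists>x. \<forall>i<d. (\<Sum>j<d. \<rho> $$ (i,j) * x j) = (\<sigma> *\<^sub>v v) $ i"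
  proof (rule range_fun[OF RF(2) RF(3)])
    fix x assume kx: "\<forall>i<d. (\<Sum>j<d. \<rho> $$ (i,j) * x j) = 0"
    have "qf d (mf \<rho>) x = (\<Sum>i<d. cnj (x i) * (\<Sum>j<d. \<rho> $$ (i,j) * x j))"
      unfolding qf_def by (simp add: sum_distrib_left mult.assoc)
    also have "\<dots> = 0" using kx by simp
    finally have q0: "qf d (mf \<rho>) x = 0" .
    have "qf d (mf \<rho>) x = qf d (\<lambda>k l. complex_of_real t * \<sigma> $$ (k,l) + complex_of_real (1 - t) * \<tau> $$ (k,l)) x"
      by (rule qf_congA) (rule ent)
    also have "\<dots> = complex_of_real t * qf d (mf \<sigma>) x + complex_of_real (1 - t) * qf d (mf \<tau>) x"
      by (rule qf_lin)
    finally have "Re (qf d (mf \<rho>) x) = Re (complex_of_real t * qf d (mf \<sigma>) x + complex_of_real (1 - t) * qf d (mf \<tau>) x)"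
      by (rule arg_cong)
    also have "\<dots> = t * Re (qf d (mf \<sigma>) x) + (1 - t) * Re (qf d (mf \<tau>) x)"
      by (simp only: plus_complex.sel Re_ofreal_mult)
    finally have "0 = t * Re (qf d (mf \<sigma>) x) + (1 - t) * Re (qf d (mf \<tau>) x)"
      using q0 by simp
    moreover have "0 \<le> Re (qf d (mf \<sigma>) x)" "0 \<le> Re (qf d (mf \<tau>) x)"
      using SF(3) TF(3) unfolding psdf_def by auto
    ultimately have "t * Re (qf d (mf \<sigma>) x) = 0" using t1 t0
      by (smt (verit) mult_nonneg_nonneg)
    hence "Re (qf d (mf \<sigma>) x) = 0" using t0 by simp
    from null_lemma[OF SF(2) SF(3) this] have sx: "\<forall>i<d. (\<Sum>j<d. \<sigma> $$ (i,j) * x j) = 0" .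
    have "(\<Sum>i<d. (\<sigma> *\<^sub>v v) $ i * cnj (x i)) = (\<Sum>i<d. \<Sum>j<d. \<sigma> $$ (i,j) * v $ j * cnj (x i))"
      using yv by (simp add: sum_distrib_right)
    also have "\<dots> = (\<Sum>j<d. \<Sum>i<d. \<sigma> $$ (i,j) * v $ j * cnj (x i))" by (rule sum.swap)
    also have "\<dots> = (\<Sum>j<d. v $ j * cnj (\<Sum>i<d. \<sigma> $$ (j,i) * x i))"
    proof (intro sum.cong refl)
      fix j assume j: "j \<in> {..<d}"
      have "(\<Sum>i<d. \<sigma> $$ (i,j) * v $ j * cnj (x i)) = v $ j * (\<Sum>i<d. cnj (\<sigma> $$ (j,i) * x i))"
        unfolding sum_distrib_left
      proof (intro sum.cong refl)
        fix i assume i: "i \<in> {..<d}"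
        have "\<sigma> $$ (i,j) = cnj (\<sigma> $$ (j,i))" using hermfD[OF SF(2), of j i] i j by simp
        thus "\<sigma> $$ (i,j) * v $ j * cnj (x i) = v $ j * cnj (\<sigma> $$ (j,i) * x i)" by simp
      qed
      thus "(\<Sum>i<d. \<sigma> $$ (i,j) * v $ j * cnj (x i)) = v $ j * cnj (\<Sum>i<d. \<sigma> $$ (j,i) * x i)"
        by simp
    qed
    also have "\<dots> = 0" using sx by simp
    finally show "(\<Sum>i<d. (\<sigma> *\<^sub>v v) $ i * cnj (x i)) = 0" .
  qed
  then obtain x where x: "\<forall>i<d. (\<Sum>j<d. \<rho> $$ (i,j) * x j) = (\<sigma> *\<^sub>v v) $ i" by blast
  have "\<rho> *\<^sub>v vec d x = \<sigma> *\<^sub>v v"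
  proof (rule eq_vecI)
    show "dim_vec (\<rho> *\<^sub>v vec d x) = dim_vec (\<sigma> *\<^sub>v v)"
      using carrier_matD[OF SF(1)] carrier_matD[OF RF(1)] by simp
    fix i assume "i < dim_vec (\<sigma> *\<^sub>v v)"
    hence i: "i < d" using carrier_matD[OF SF(1)] by simp
    have "(\<rho> *\<^sub>v vec d x) $ i = (\<Sum>j<d. \<rho> $$ (i,j) * x j)"
      using carrier_matD[OF RF(1)] i by (simp add: scalar_prod_def atLeast0LessThan)
    thus "(\<rho> *\<^sub>v vec d x) $ i = (\<sigma> *\<^sub>v v) $ i" using x i by simp
  qed
  thus "w \<in> supp d \<rho>" unfolding supp_def w by (intro CollectI exI[of _ "vec d x"]) auto
qed

context sysE
begin


lemma erg_conv:
  assumes R: "density d \<rho>" and S: "density d \<sigma>" and T: "passive_state d \<tau>"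
    and t0: "0 \<le> t" and t1: "t \<le> 1"
    and eq: "\<rho> = complex_of_real t \<cdot>\<^sub>m \<sigma> + complex_of_real (1 - t) \<cdot>\<^sub>m \<tau>"
  shows "ergotropy d E \<rho> \<le> t * ergotropy d E \<sigma>"
proof (rule erg_le[OF R])
  fix U assume u: "unitary_mat d U"
  have Td: "density d \<tau>" using T unfolding passive_state_def by blast
  note RF = density_facts[OF R] and SF = density_facts[OF S] and TF = density_facts[OF Td]
  have Uc: "U \<in> carrier_mat d d" by (rule unitary_facts(1)[OF u])
  have ent: "\<And>k l. k < d \<Longrightarrow> l < d \<Longrightarrow> \<rho> $$ (k,l) = complex_of_real t * \<sigma> $$ (k,l) + complex_of_real (1 - t) * \<tau> $$ (k,l)"
    by (rule mix_entries[OF SF(1) TF(1) eq])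
  have rot: "rotq d U \<rho> i = complex_of_real t * rotq d U \<sigma> i + complex_of_real (1 - t) * rotq d U \<tau> i" for i
  proof -
    have "rotq d U \<rho> i = qf d (\<lambda>k l. complex_of_real t * \<sigma> $$ (k,l) + complex_of_real (1 - t) * \<tau> $$ (k,l)) (\<lambda>k. cnj (U $$ (i,k)))"
      unfolding rotq_def by (rule qf_congA) (rule ent)
    thus ?thesis unfolding qf_lin rotq_def .
  qed
  have "energy d E \<rho> - energy d E (U * \<rho> * mat_adjoint U)
      = (\<Sum>i<d. E i * Re (\<rho> $$ (i,i))) - (\<Sum>i<d. E i * Re (rotq d U \<rho> i))"
    by (rule ed_formula[OF Uc RF(1)])
  also have "\<dots> = t * ((\<Sum>i<d. E i * Re (\<sigma> $$ (i,i))) - (\<Sum>i<d. E i * Re (rotq d U \<sigma> i)))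
      + (1 - t) * ((\<Sum>i<d. E i * Re (\<tau> $$ (i,i))) - (\<Sum>i<d. E i * Re (rotq d U \<tau> i)))"
  proof -
    have a: "(\<Sum>i<d. E i * Re (\<rho> $$ (i,i))) = t * (\<Sum>i<d. E i * Re (\<sigma> $$ (i,i))) + (1 - t) * (\<Sum>i<d. E i * Re (\<tau> $$ (i,i)))"
    proof -
      have "(\<Sum>i<d. E i * Re (\<rho> $$ (i,i))) = (\<Sum>i<d. t * (E i * Re (\<sigma> $$ (i,i))) + (1 - t) * (E i * Re (\<tau> $$ (i,i))))"
        by (intro sum.cong refl) (simp add: ent algebra_simps)
      thus ?thesis by (simp only: sum.distrib sum_distrib_left)
    qed
    have b: "(\<Sum>i<d. E i * Re (rotq d U \<rho> i)) = t * (\<Sum>i<d. E i * Re (rotq d U \<sigma> i)) + (1 - t) * (\<Sum>i<d. E i * Re (rotq d U \<tau> i))"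
    proof -
      have "(\<Sum>i<d. E i * Re (rotq d U \<rho> i)) = (\<Sum>i<d. t * (E i * Re (rotq d U \<sigma> i)) + (1 - t) * (E i * Re (rotq d U \<tau> i)))"
        by (intro sum.cong refl) (simp add: rot algebra_simps)
      thus ?thesis by (simp only: sum.distrib sum_distrib_left)
    qed
    show ?thesis unfolding a b by (simp add: algebra_simps)
  qed
  also have "\<dots> = t * (energy d E \<sigma> - energy d E (U * \<sigma> * mat_adjoint U))
      + (1 - t) * (energy d E \<tau> - energy d E (U * \<tau> * mat_adjoint U))"
    unfolding ed_formula[OF Uc SF(1)] ed_formula[OF Uc TF(1)] ..
  also have "\<dots> \<le> t * ergotropy d E \<sigma> + (1 - t) * 0"
  proof (rule add_mono)
    show "t * (energy d E \<sigma> - energy d E (U * \<sigma> * mat_adjoint U)) \<le> t * ergotropy d E \<sigma>"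
      by (rule mult_left_mono[OF erg_ge[OF S u] t0])
    show "(1 - t) * (energy d E \<tau> - energy d E (U * \<tau> * mat_adjoint U)) \<le> (1 - t) * 0"
      by (rule mult_left_mono[OF erg_passive_diff[OF T u]]) (use t1 in simp)
  qed
  finally show "energy d E \<rho> - energy d E (U * \<rho> * mat_adjoint U) \<le> t * ergotropy d E \<sigma>" by simp
qed

lemma erg_R:
  assumes R: "density d \<rho>" and S: "density d \<sigma>" and t0: "0 \<le> t"
    and P: "passive_state d (complex_of_real (1 / (1 + t)) \<cdot>\<^sub>m (\<rho> + complex_of_real t \<cdot>\<^sub>m \<sigma>))"
    and md: "m < d" and z: "\<And>i. m < i \<Longrightarrow> i < d \<Longrightarrow> \<rho> $$ (i,i) = 0"
  shows "ergotropy d E \<rho> \<le> t * (E m - E 0)"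
proof (rule erg_le[OF R])
  fix U assume u: "unitary_mat d U"
  define T where "T = complex_of_real (1 / (1 + t)) \<cdot>\<^sub>m (\<rho> + complex_of_real t \<cdot>\<^sub>m \<sigma>)"
  obtain p where Tp: "T = mat_diag d (\<lambda>i. complex_of_real (p i))"
    and dec: "\<And>i j. i \<le> j \<Longrightarrow> j < d \<Longrightarrow> p j \<le> p i" and Td: "density d T"
    and p0: "\<And>i. i < d \<Longrightarrow> 0 \<le> p i" and ps: "(\<Sum>i<d. p i) = 1"
    using passive_D[OF P[folded T_def]] by blast
  note RF = density_facts[OF R] and SF = density_facts[OF S] and TF = density_facts[OF Td]
  note RoF = rot_facts[OF R u] and SoF = rot_facts[OF S u]
  have Uc: "U \<in> carrier_mat d d" by (rule unitary_facts(1)[OF u])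
  have t1: "1 + t \<noteq> 0" using t0 by simp
  have t1c: "1 + complex_of_real t \<noteq> 0" using t1 by (metis of_real_1 of_real_add of_real_eq_0_iff)
  have entT: "T $$ (k,l) = complex_of_real (1 / (1 + t)) * (\<rho> $$ (k,l) + complex_of_real t * \<sigma> $$ (k,l))"
    if "k < d" "l < d" for k l
    using carrier_matD[OF RF(1)] carrier_matD[OF SF(1)] that unfolding T_def by simp
  have ent: "\<rho> $$ (k,l) = complex_of_real (1 + t) * T $$ (k,l) + complex_of_real (- t) * \<sigma> $$ (k,l)"
    if "k < d" "l < d" for k l
  proof -
    have "complex_of_real (1 + t) * T $$ (k,l) = \<rho> $$ (k,l) + complex_of_real t * \<sigma> $$ (k,l)"
      unfolding entT[OF that] using t1c by simp
    thus ?thesis by simp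
  qed
  have diag: "Re (\<rho> $$ (i,i)) = (1 + t) * p i - t * Re (\<sigma> $$ (i,i))" if "i < d" for i
    using ent[OF that that] that unfolding Tp mat_diag_def by simp
  have rot: "Re (rotq d U \<rho> i) = (1 + t) * Re (rotq d U T i) - t * Re (rotq d U \<sigma> i)" for i
  proof -
    have "rotq d U \<rho> i = qf d (\<lambda>k l. complex_of_real (1 + t) * T $$ (k,l) + complex_of_real (- t) * \<sigma> $$ (k,l)) (\<lambda>k. cnj (U $$ (i,k)))"
      unfolding rotq_def by (rule qf_congA) (rule ent)
    hence "rotq d U \<rho> i = complex_of_real (1 + t) * rotq d U T i + complex_of_real (- t) * rotq d U \<sigma> i"
      unfolding qf_lin rotq_def .
    thus ?thesis by simp
  qed
  have "energy d E \<rho> - energy d E (U * \<rho> * mat_adjoint U)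
      = (\<Sum>i<d. E i * Re (\<rho> $$ (i,i))) - (\<Sum>i<d. E i * Re (rotq d U \<rho> i))"
    by (rule ed_formula[OF Uc RF(1)])
  also have "\<dots> \<le> t * (E m - E 0)"
  proof (rule ebound[OF md t0])
    show "\<And>j. Suc j < d \<Longrightarrow> E j \<le> E (Suc j)" by (rule Estep)
    show "(\<Sum>i<d. Re (\<rho> $$ (i,i))) = (\<Sum>i<d. Re (rotq d U \<rho> i))" using RF(4) RoF(2) by simp
    fix j
    show "j < m \<Longrightarrow> - t \<le> (\<Sum>i<Suc j. Re (\<rho> $$ (i,i))) - (\<Sum>i<Suc j. Re (rotq d U \<rho> i))"
    proof -
      assume j: "j < m"
      have jd: "j < d" using j md by simp
      define P where "P = (\<Sum>i<Suc j. p i)"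
      define Sd where "Sd = (\<Sum>i<Suc j. Re (\<sigma> $$ (i,i)))"
      define K where "K = (\<Sum>i<Suc j. Re (rotq d U T i))"
      define Sr where "Sr = (\<Sum>i<Suc j. Re (rotq d U \<sigma> i))"
      have e1: "(\<Sum>i<Suc j. Re (\<rho> $$ (i,i))) = (1 + t) * P - t * Sd"
      proof -
        have "(\<Sum>i<Suc j. Re (\<rho> $$ (i,i))) = (\<Sum>i<Suc j. (1 + t) * p i - t * Re (\<sigma> $$ (i,i)))"
          using jd by (intro sum.cong refl) (simp add: diag)
        thus ?thesis unfolding P_def Sd_def by (simp add: sum_subtractf sum_distrib_left)
      qed
      have e2: "(\<Sum>i<Suc j. Re (rotq d U \<rho> i)) = (1 + t) * K - t * Sr"
        unfolding K_def Sr_def rot by (simp add: sum_subtractf sum_distrib_left)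
      have KP: "K \<le> P" unfolding K_def P_def by (rule kyfan_rot[OF Tp dec p0 u jd])
      have Sd1: "Sd \<le> 1" unfolding Sd_def
        using psum_le[of d "\<lambda>i. Re (\<sigma> $$ (i,i))" j] diag_nonneg[OF S] jd SF(4) by simp
      have Sr0: "0 \<le> Sr" unfolding Sr_def
        by (rule psum_ge0[of d]) (use SoF(1) jd in auto)
      have "0 \<le> (1 + t) * (P - K)" using KP t0 by simp
      moreover have "t * Sd \<le> t" using mult_left_mono[OF Sd1 t0] by simp
      moreover have "0 \<le> t * Sr" using t0 Sr0 by simp
      ultimately show ?thesis unfolding e1 e2 by (simp add: algebra_simps)
    qed
    show "m \<le> j \<Longrightarrow> j < d \<Longrightarrow> (\<Sum>i<Suc j. Re (rotq d U \<rho> i)) \<le> (\<Sum>i<Suc j. Re (\<rho> $$ (i,i)))"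
    proof -
      assume mj: "m \<le> j" and jd: "j < d"
      have "(\<Sum>i<Suc j. Re (\<rho> $$ (i,i))) = (\<Sum>i<d. Re (\<rho> $$ (i,i)))"
        by (rule sum_tail_zero[OF _ mj jd]) (simp add: z)
      moreover have "(\<Sum>i<Suc j. Re (rotq d U \<rho> i)) \<le> (\<Sum>i<d. Re (rotq d U \<rho> i))"
        by (rule psum_le) (use RoF(1) jd in auto)
      ultimately show ?thesis using RoF(2) RF(4) by simp
    qed
  qed
  finally show "energy d E \<rho> - energy d E (U * \<rho> * mat_adjoint U) \<le> t * (E m - E 0)" .
qed

end




lemma R_witness: assumes d1: "d \<ge> 1" and R: "density d \<rho>"
  shows "\<exists>t \<sigma>. 0 \<le> t \<and> density d \<sigma> \<and>
     passive_state d (complex_of_real (1 / (1 + t)) \<cdot>\<^sub>m (\<rho> + complex_of_real t \<cdot>\<^sub>m \<sigma>))"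
proof -
  note RF = density_facts[OF R]
  define K where "K = (\<Sum>i<d. \<Sum>j<d. cmod (\<rho> $$ (i,j)))"
  have K0: "0 \<le> K" unfolding K_def by (intro sum_nonneg) auto
  define t where "t = real d * (K + 2) - 1"
  have dK: "real d * (K + 2) \<ge> 2" using d1 K0
    by (metis add_increasing2 mult_1 mult_mono of_nat_1 of_nat_mono order_refl zero_le_numeral K0 zero_le_one le_add_same_cancel2)
  have t1: "t \<ge> 1" unfolding t_def using dK by simp
  have tn0: "t \<noteq> 0" using t1 by simp
  define a where "a = (K + 2) / t"
  define b where "b = - 1 / t"
  define \<sigma> where "\<sigma> = Matrix.mat d d (\<lambda>(k,l). complex_of_real a * (if k = l then 1 else 0) + complex_of_real b * \<rho> $$ (k,l))"
  have Sc: "\<sigma> \<in> carrier_mat d d" unfolding \<sigma>_def by simp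
  have Sent: "\<sigma> $$ (k,l) = complex_of_real a * (if k = l then 1 else 0) + complex_of_real b * \<rho> $$ (k,l)"
    if "k < d" "l < d" for k l using that unfolding \<sigma>_def by simp
  have hS: "hermf d (mf \<sigma>)" unfolding hermf_def
  proof (intro allI impI)
    fix i j assume i: "i < d" and j: "j < d"
    show "\<sigma> $$ (j,i) = cnj (\<sigma> $$ (i,j))"
      unfolding Sent[OF i j] Sent[OF j i] using hermfD[OF RF(2) i j] by auto
  qed
  have pS: "psdf d (mf \<sigma>)" unfolding psdf_def
  proof
    fix v
    define N where "N = (\<Sum>i<d. (cmod (v i))^2)"
    have N0: "0 \<le> N" unfolding N_def by (intro sum_nonneg) auto
    have "qf d (mf \<sigma>) v = qf d (\<lambda>k l. complex_of_real a * (if k = l then 1 else 0) + complex_of_real b * \<rho> $$ (k,l)) v"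
      by (rule qf_congA) (rule Sent)
    also have "\<dots> = complex_of_real a * qf d (\<lambda>k l. if k = l then 1 else 0) v + complex_of_real b * qf d (mf \<rho>) v"
      by (rule qf_lin)
    also have "qf d (\<lambda>k l. if k = l then 1 else 0) v = complex_of_real N"
      using qf_diag[of d "\<lambda>_. 1" v] unfolding N_def by simp
    finally have "Re (qf d (mf \<sigma>) v) = a * N + b * Re (qf d (mf \<rho>) v)" by simp
    also have "\<dots> = ((K + 2) * N - Re (qf d (mf \<rho>) v)) / t" unfolding a_def b_def using tn0 by (simp add: field_simps)
    also have "\<dots> \<ge> 0"
    proof -
      have "Re (qf d (mf \<rho>) v) \<le> K * N" unfolding K_def N_def by (rule qf_bound)
      hence "0 \<le> (K + 2) * N - Re (qf d (mf \<rho>) v)" using N0 by (simp add: algebra_simps)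
      thus ?thesis using t1 by simp
    qed
    finally show "0 \<le> Re (qf d (mf \<sigma>) v)" .
  qed
  have trR: "(\<Sum>i<d. \<rho> $$ (i,i)) = 1" using R RF(1) unfolding density_def mtrace_def by simp
  have trS: "mtrace \<sigma> = 1"
  proof -
    have "mtrace \<sigma> = (\<Sum>i<d. complex_of_real a + complex_of_real b * \<rho> $$ (i,i))"
      unfolding mtrace_def using Sc by (intro sum.cong) (auto simp: Sent)
    also have "\<dots> = complex_of_real (real d * a + b)"
      by (simp add: sum.distrib sum_distrib_left[symmetric] trR)
    also have "real d * a + b = 1"
    proof -
      have "real d * a + b = (real d * (K + 2) - 1) / t" unfolding a_def b_def using tn0
        by (simp add: field_simps)
      also have "\<dots> = 1" unfolding t_def[symmetric] using tn0 by simp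
      finally show ?thesis .
    qed
    finally show ?thesis by simp
  qed
  have Sd: "density d \<sigma>" unfolding density_def using fun_psd[OF Sc hS pS] trS by simp
  have dpos: "real d > 0" using d1 by simp
  have key: "complex_of_real (1 / (1 + t)) * (r + complex_of_real t * (complex_of_real a * \<delta> + complex_of_real b * r))
      = complex_of_real (1 / real d) * \<delta>" for r \<delta> :: complex
  proof -
    have ta: "t * a = K + 2" unfolding a_def using tn0 by simp
    have tb: "t * b = - 1" unfolding b_def using tn0 by simp
    have "r + complex_of_real t * (complex_of_real a * \<delta> + complex_of_real b * r)
        = r * complex_of_real (1 + t * b) + complex_of_real (t * a) * \<delta>"
      by (simp add: algebra_simps)
    also have "\<dots> = complex_of_real (K + 2) * \<delta>" unfolding ta tb by simp
    finally have "complex_of_real (1 / (1 + t)) * (r + complex_of_real t * (complex_of_real a * \<delta> + complex_of_real b * r))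
       = complex_of_real ((K + 2) / (1 + t)) * \<delta>" by simp
    also have "(K + 2) / (1 + t) = 1 / real d"
    proof -
      have "1 + t = real d * (K + 2)" unfolding t_def by simp
      moreover have "K + 2 \<noteq> 0" using K0 by simp
      ultimately show ?thesis using dpos by simp
    qed
    finally show ?thesis .
  qed
  have "complex_of_real (1 / (1 + t)) \<cdot>\<^sub>m (\<rho> + complex_of_real t \<cdot>\<^sub>m \<sigma>) = mat_diag d (\<lambda>i. complex_of_real (1 / real d))"
  proof (rule eq_matI)
    fix k l assume "k < dim_row (mat_diag d (\<lambda>i. complex_of_real (1 / real d)))"
      "l < dim_col (mat_diag d (\<lambda>i. complex_of_real (1 / real d)))"
    hence k: "k < d" and l: "l < d" by (simp_all add: mat_diag_def)
    have "(complex_of_real (1 / (1 + t)) \<cdot>\<^sub>m (\<rho> + complex_of_real t \<cdot>\<^sub>m \<sigma>)) $$ (k,l)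
       = complex_of_real (1 / (1 + t)) * (\<rho> $$ (k,l) + complex_of_real t * \<sigma> $$ (k,l))"
      using carrier_matD[OF RF(1)] carrier_matD[OF Sc] k l by simp
    also have "\<dots> = complex_of_real (1 / real d) * (if k = l then 1 else 0)"
      unfolding Sent[OF k l] by (rule key)
    also have "\<dots> = mat_diag d (\<lambda>i. complex_of_real (1 / real d)) $$ (k,l)"
      using k l by (simp add: mat_diag_def)
    finally show "(complex_of_real (1 / (1 + t)) \<cdot>\<^sub>m (\<rho> + complex_of_real t \<cdot>\<^sub>m \<sigma>)) $$ (k,l)
       = mat_diag d (\<lambda>i. complex_of_real (1 / real d)) $$ (k,l)" .
  qed (use carrier_matD[OF RF(1)] carrier_matD[OF Sc] in \<open>auto simp: mat_diag_def\<close>)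
  moreover have "passive_state d (mat_diag d (\<lambda>i. complex_of_real (1 / real d)))"
    by (rule passive_intro) (use dpos in auto)
  ultimately show ?thesis using Sd t1 by (intro exI[of _ t] exI[of _ \<sigma>]) auto
qed




theorem mainTheorem11:
  fixes d :: nat and E :: "nat \<Rightarrow> real" and \<rho> :: "complex mat"
  assumes "d \<ge> 1"
    and "\<And>i j. i < j \<Longrightarrow> j < d \<Longrightarrow> E i < E j"
    and "density d \<rho>"
  shows "ergotropy d E \<rho> \<le> activity_weight d \<rho> *
           (SUP \<sigma> \<in> {\<sigma>. density d \<sigma> \<and> supp d \<sigma> \<subseteq> supp d \<rho>}. ergotropy d E \<sigma>) \<and>
         ergotropy d E \<rho> \<le> min (activity_robustness d \<rho>) 1 *
           (E (Max {i. i < d \<and> \<rho> $$ (i, i) \<noteq> 0}) - E 0)"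
proof -
  interpret sysE d E using assms(1,2) by unfold_locales auto
  note R = assms(3)
  note RF = density_facts[OF R]
  define Sset where "Sset = {\<sigma>. density d \<sigma> \<and> supp d \<sigma> \<subseteq> supp d \<rho>}"
  define M where "M = (SUP \<sigma> \<in> Sset. ergotropy d E \<sigma>)"
  have bddS: "bdd_above ((\<lambda>\<sigma>. ergotropy d E \<sigma>) ` Sset)"
  proof (rule bdd_aboveI2)
    fix \<sigma> assume "\<sigma> \<in> Sset"
    hence S: "density d \<sigma>" unfolding Sset_def by simp
    show "ergotropy d E \<sigma> \<le> E (d - 1) - E 0" by (rule erg_G[OF S]) (use d1 in auto)
  qed
  have \<rho>S: "\<rho> \<in> Sset" unfolding Sset_def using R by simp
  have Mge: "ergotropy d E \<rho> \<le> M" unfolding M_def by (rule cSUP_upper[OF \<rho>S bddS])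
  have E0: "0 \<le> ergotropy d E \<rho>" by (rule erg_nonneg[OF R])
  have M0: "0 \<le> M" using Mge E0 by simp
  have part1: "ergotropy d E \<rho> \<le> activity_weight d \<rho> * M"
  proof -
    define W where "W = {t. t \<ge> 0 \<and> (\<exists>\<sigma> \<tau>. density d \<sigma> \<and> passive_state d \<tau> \<and>
      \<rho> = complex_of_real t \<cdot>\<^sub>m \<sigma> + complex_of_real (1 - t) \<cdot>\<^sub>m \<tau>)}"
    have AW: "activity_weight d \<rho> = Inf W" unfolding activity_weight_def W_def ..
    have bound: "ergotropy d E \<rho> \<le> t * M" if tW: "t \<in> W" for t
    proof -
      from tW obtain \<sigma> \<tau> where t0: "t \<ge> 0" and S: "density d \<sigma>" and T: "passive_state d \<tau>"
        and eq: "\<rho> = complex_of_real t \<cdot>\<^sub>m \<sigma> + complex_of_real (1 - t) \<cdot>\<^sub>m \<tau>"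
        unfolding W_def by blast
      show ?thesis
      proof (cases "t \<ge> 1")
        case True
        have "M \<le> t * M" using mult_right_mono[OF True M0] by simp
        thus ?thesis using Mge by simp
      next
        case False
        hence t1: "t \<le> 1" by simp
        have c: "ergotropy d E \<rho> \<le> t * ergotropy d E \<sigma>" by (rule erg_conv[OF R S T t0 t1 eq])
        show ?thesis
        proof (cases "t = 0")
          case True thus ?thesis using c by simp
        next
          case False
          hence tp: "0 < t" using t0 by simp
          have Td: "density d \<tau>" using T unfolding passive_state_def by blast
          have "supp d \<sigma> \<subseteq> supp d \<rho>" by (rule supp_incl[OF R S Td tp t1 eq])
          hence "\<sigma> \<in> Sset" unfolding Sset_def using S by simp
          hence "ergotropy d E \<sigma> \<le> M" unfolding M_def by (rule cSUP_upper[OF _ bddS])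
          hence "t * ergotropy d E \<sigma> \<le> t * M" using t0 by (rule mult_left_mono)
          thus ?thesis using c by simp
        qed
      qed
    qed
    have Wne: "W \<noteq> {}"
    proof -
      define \<tau>0 where "\<tau>0 = mat_diag d (\<lambda>i. complex_of_real (if i = 0 then 1 else 0))"
      have T0: "passive_state d \<tau>0" unfolding \<tau>0_def
        by (rule passive_intro) (use d1 in \<open>auto simp: sum.delta\<close>)
      have "\<rho> = complex_of_real 1 \<cdot>\<^sub>m \<rho> + complex_of_real (1 - 1) \<cdot>\<^sub>m \<tau>0"
        by (rule eq_matI) (use carrier_matD[OF RF(1)] in \<open>auto simp: \<tau>0_def mat_diag_def\<close>)
      hence "1 \<in> W" unfolding W_def using R T0 by auto
      thus ?thesis by blast
    qed
    show ?thesis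
    proof (cases "M = 0")
      case True thus ?thesis using Mge by simp
    next
      case False
      hence Mp: "M > 0" using M0 by simp
      have "ergotropy d E \<rho> / M \<le> Inf W"
      proof (rule cInf_greatest[OF Wne])
        fix t assume "t \<in> W"
        thus "ergotropy d E \<rho> / M \<le> t" using bound Mp by (simp add: divide_le_eq)
      qed
      thus ?thesis unfolding AW using Mp by (simp add: divide_le_eq)
    qed
  qed
  have part2: "ergotropy d E \<rho> \<le> min (activity_robustness d \<rho>) 1 *
           (E (Max {i. i < d \<and> \<rho> $$ (i, i) \<noteq> 0}) - E 0)"
  proof -
    define I where "I = {i. i < d \<and> \<rho> $$ (i, i) \<noteq> 0}"
    have fin: "finite I" unfolding I_def by simp
    have Ine: "I \<noteq> {}"
    proof
      assume "I = {}"
      hence "\<And>i. i < d \<Longrightarrow> \<rho> $$ (i,i) = 0" unfolding I_def by blast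
      hence "(\<Sum>i<d. Re (\<rho> $$ (i,i))) = 0" by simp
      thus False using RF(4) by simp
    qed
    define m where "m = Max I"
    have mI: "m \<in> I" unfolding m_def using Max_in[OF fin Ine] .
    have md: "m < d" using mI unfolding I_def by simp
    have z: "\<rho> $$ (i,i) = 0" if "m < i" "i < d" for i
    proof (rule ccontr)
      assume "\<rho> $$ (i,i) \<noteq> 0"
      hence "i \<in> I" using that unfolding I_def by simp
      hence "i \<le> m" unfolding m_def using Max_ge[OF fin] by simp
      thus False using that by simp
    qed
    have c0: "0 \<le> E m - E 0" using E0_le[OF md] by simp
    have ea: "ergotropy d E \<rho> \<le> E m - E 0" by (rule erg_G[OF R md z])
    define Rs where "Rs = {t. t \<ge> 0 \<and> (\<exists>\<sigma>. density d \<sigma> \<and>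
      passive_state d (complex_of_real (1 / (1 + t)) \<cdot>\<^sub>m (\<rho> + complex_of_real t \<cdot>\<^sub>m \<sigma>)))}"
    have AR: "activity_robustness d \<rho> = Inf Rs" unfolding activity_robustness_def Rs_def ..
    have Rne: "Rs \<noteq> {}" using R_witness[OF d1 R] unfolding Rs_def by blast
    have rb: "ergotropy d E \<rho> \<le> t * (E m - E 0)" if "t \<in> Rs" for t
    proof -
      from that obtain \<sigma> where t0: "t \<ge> 0" and S: "density d \<sigma>"
        and P: "passive_state d (complex_of_real (1 / (1 + t)) \<cdot>\<^sub>m (\<rho> + complex_of_real t \<cdot>\<^sub>m \<sigma>))"
        unfolding Rs_def by blast
      show ?thesis by (rule erg_R[OF R S t0 P md z])
    qed
    have eb: "ergotropy d E \<rho> \<le> activity_robustness d \<rho> * (E m - E 0)"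
    proof (cases "E m - E 0 = 0")
      case True thus ?thesis using ea by simp
    next
      case False
      hence cp: "E m - E 0 > 0" using c0 by simp
      have "ergotropy d E \<rho> / (E m - E 0) \<le> Inf Rs"
      proof (rule cInf_greatest[OF Rne])
        fix t assume "t \<in> Rs"
        thus "ergotropy d E \<rho> / (E m - E 0) \<le> t" using rb cp by (simp add: divide_le_eq)
      qed
      thus ?thesis unfolding AR using cp by (simp add: divide_le_eq)
    qed
    have "ergotropy d E \<rho> \<le> min (activity_robustness d \<rho>) 1 * (E m - E 0)"
      by (cases "activity_robustness d \<rho> \<le> 1") (use ea eb in \<open>auto simp: min_def\<close>)
    thus ?thesis unfolding m_def I_def .
  qed
  show ?thesis using part1 part2 unfolding M_def Sset_def by simp
qed



end
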